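(* If $G$ is a bipartite, connected, nontraceable detour graph, then $\Delta(G)\le \left\lceil \frac{\tau(G)-2}{2}\right\rceil$.
   Context: All graphs are finite and simple; the order of a path is its number of vertices. For a vertex $v$, $\tau(v)$ is the order of a longest path in $G$ having $v$ as an endvertex, and $\tau(G)$ is the order of a longest path in $G$. A detour graph is one in which all vertices have the same $\tau(v)$. Nontraceable means having no hamiltonian path. $\Delta(G)$ is the maximum degree. *)

theory Defs
  imports Complex_Main
begin

definition simple_graph :: "'a set \<Rightarrow> ('a \<Rightarrow> 'a \<Rightarrow> bool) \<Rightarrow> bool" where
  "simple_graph V E \<longleftrightarrow> finite V \<and> (\<forall>u v. E u v \<longrightarrow> u \<in> V \<and> v \<in> V)
     \<and> (\<forall>u v. E u v \<longrightarrow> E v u) \<and> (\<forall>v. \<not> E v v)"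

definition is_path :: "'a set \<Rightarrow> ('a \<Rightarrow> 'a \<Rightarrow> bool) \<Rightarrow> 'a list \<Rightarrow> bool" where
  "is_path V E p \<longleftrightarrow> p \<noteq> [] \<and> distinct p \<and> set p \<subseteq> V
     \<and> (\<forall>i. Suc i < length p \<longrightarrow> E (p ! i) (p ! Suc i))"

text \<open>tau v: order of a longest path with v as an endvertex (paths can be reversed,
so w.l.o.g. v is the first vertex).\<close>
definition tau_v :: "'a set \<Rightarrow> ('a \<Rightarrow> 'a \<Rightarrow> bool) \<Rightarrow> 'a \<Rightarrow> nat" where
  "tau_v V E v = Max {length p | p. is_path V E p \<and> hd p = v}"

definition tau :: "'a set \<Rightarrow> ('a \<Rightarrow> 'a \<Rightarrow> bool) \<Rightarrow> nat" where
  "tau V E = Max {length p | p. is_path V E p}"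

definition detour_graph :: "'a set \<Rightarrow> ('a \<Rightarrow> 'a \<Rightarrow> bool) \<Rightarrow> bool" where
  "detour_graph V E \<longleftrightarrow> (\<forall>u\<in>V. \<forall>v\<in>V. tau_v V E u = tau_v V E v)"

definition traceable :: "'a set \<Rightarrow> ('a \<Rightarrow> 'a \<Rightarrow> bool) \<Rightarrow> bool" where
  "traceable V E \<longleftrightarrow> (\<exists>p. is_path V E p \<and> set p = V)"

definition connected_graph :: "'a set \<Rightarrow> ('a \<Rightarrow> 'a \<Rightarrow> bool) \<Rightarrow> bool" where
  "connected_graph V E \<longleftrightarrow> V \<noteq> {} \<and>
     (\<forall>u\<in>V. \<forall>v\<in>V. \<exists>p. is_path V E p \<and> hd p = u \<and> last p = v)"

definition bipartite :: "'a set \<Rightarrow> ('a \<Rightarrow> 'a \<Rightarrow> bool) \<Rightarrow> bool" where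
  "bipartite V E \<longleftrightarrow> (\<exists>A B. A \<union> B = V \<and> A \<inter> B = {} \<and>
     (\<forall>u v. E u v \<longrightarrow> (u \<in> A \<and> v \<in> B) \<or> (u \<in> B \<and> v \<in> A)))"

definition degree :: "'a set \<Rightarrow> ('a \<Rightarrow> 'a \<Rightarrow> bool) \<Rightarrow> 'a \<Rightarrow> nat" where
  "degree V E v = card {u\<in>V. E v u}"

definition max_degree :: "'a set \<Rightarrow> ('a \<Rightarrow> 'a \<Rightarrow> bool) \<Rightarrow> nat" where
  "max_degree V E = Max (degree V E ` V)"

end

theory Submission
  imports Defs
begin

lemma path_cons:
  assumes "is_path V E p" "w \<in> V" "w \<notin> set p" "E w (hd p)"
  shows "is_path V E (w # p)"
proof -
  have "E ((w # p) ! i) ((w # p) ! Suc i)" if "Suc i < length (w # p)" for i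
  proof (cases i)
    case 0
    then show ?thesis using assms unfolding is_path_def by (auto simp: hd_conv_nth)
  next
    case (Suc k)
    then show ?thesis using assms that unfolding is_path_def by auto
  qed
  then show ?thesis using assms unfolding is_path_def by auto
qed

lemma path_len_le:
  assumes "simple_graph V E" "is_path V E p"
  shows "length p \<le> card V"
  using assms unfolding simple_graph_def is_path_def
  by (metis card_mono distinct_card)

lemma fin_lens:
  assumes "simple_graph V E"
  shows "finite {length p | p. is_path V E p \<and> P p}"
proof -
  have "{length p | p. is_path V E p \<and> P p} \<subseteq> {..card V}"
    using path_len_le[OF assms] by auto
  then show ?thesis using finite_subset by blast
qed

lemma path_rotate:
  assumes "is_path V E p" "E (last p) (hd p)"
  shows "is_path V E (rotate j p)"
proof -
  let ?n = "length p"
  have np: "?n > 0" using assms unfolding is_path_def by auto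
  have "E (rotate j p ! i) (rotate j p ! Suc i)" if "Suc i < ?n" for i
  proof -
    have r1: "rotate j p ! i = p ! ((j + i) mod ?n)" using that by (simp add: nth_rotate)
    have r2: "rotate j p ! Suc i = p ! ((j + Suc i) mod ?n)" using that by (simp add: nth_rotate)
    show ?thesis
    proof (cases "(j + Suc i) mod ?n = 0")
      case True
      then have "(j + i) mod ?n = ?n - 1" using np
        by (metis add_Suc_right mod_Suc diff_Suc_1 nat.simps(3) mod_less_divisor)
      then show ?thesis using True r1 r2 assms np
        by (simp add: last_conv_nth hd_conv_nth is_path_def)
    next
      case False
      then have "(j + Suc i) mod ?n = Suc ((j + i) mod ?n)"
        by (simp add: mod_Suc split: if_splits)
      moreover have "Suc ((j + i) mod ?n) < ?n" using calculation np
        by (metis mod_less_divisor)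
      ultimately show ?thesis using r1 r2 assms unfolding is_path_def by auto
    qed
  qed
  then show ?thesis using assms unfolding is_path_def by auto
qed

lemma parity:
  assumes "is_path V E p" "A \<union> B = V" "A \<inter> B = {}"
    "\<forall>u v. E u v \<longrightarrow> (u \<in> A \<and> v \<in> B) \<or> (u \<in> B \<and> v \<in> A)"
  shows "i < length p \<Longrightarrow> (p ! i \<in> A) = (if even i then p ! 0 \<in> A else p ! 0 \<notin> A)"
proof (induction i)
  case 0
  then show ?case by simp
next
  case (Suc i)
  have "E (p ! i) (p ! Suc i)" using assms(1) Suc.prems unfolding is_path_def by auto
  then have "(p ! Suc i \<in> A) = (p ! i \<notin> A)" using assms(3,4) by blast
  then show ?case using Suc by auto
qed

lemma card_odd: "card {i::nat. i < t \<and> odd i} = t div 2"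
proof (induction t)
  case 0
  then show ?case by simp
next
  case (Suc t)
  show ?case
  proof (cases "odd t")
    case True
    have "{i. i < Suc t \<and> odd i} = insert t {i. i < t \<and> odd i}" using True by auto
    then show ?thesis using Suc True by simp
  next
    case False
    have "{i. i < Suc t \<and> odd i} = {i. i < t \<and> odd i}" using False less_Suc_eq by auto
    then show ?thesis using Suc False by simp
  qed
qed

theorem theorem2p27:
  fixes V :: "'a set" and E :: "'a \<Rightarrow> 'a \<Rightarrow> bool"
  assumes "simple_graph V E"
    and "bipartite V E"
    and "connected_graph V E"
    and "\<not> traceable V E"
    and "detour_graph V E"
  shows "int (max_degree V E) \<le> ceiling ((real (tau V E) - 2) / 2)"
proof -
  have sg: "finite V" "\<And>u v. E u v \<Longrightarrow> u \<in> V \<and> v \<in> V" "\<And>u v. E u v \<Longrightarrow> E v u"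
    "\<And>v. \<not> E v v" using assms(1) unfolding simple_graph_def by auto
  have Vne: "V \<noteq> {}" using assms(3) unfolding connected_graph_def by auto
  obtain A B where AB: "A \<union> B = V" "A \<inter> B = {}"
    "\<forall>u v. E u v \<longrightarrow> (u \<in> A \<and> v \<in> B) \<or> (u \<in> B \<and> v \<in> A)"
    using assms(2) unfolding bipartite_def by blast
  let ?t = "tau V E"
  have finT: "finite {length p | p. is_path V E p}"
    using fin_lens[OF assms(1), of "\<lambda>_. True"] by simp
  have finTv: "\<And>v. finite {length p | p. is_path V E p \<and> hd p = v}"
    using fin_lens[OF assms(1), of "\<lambda>p. hd p = _"] by simp
  have le_t: "\<And>q. is_path V E q \<Longrightarrow> length q \<le> ?t"
    unfolding tau_def using finT Max_ge by blast
  have tv_t: "tau_v V E v = ?t" if "v \<in> V" for v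
  proof -
    obtain u0 where "u0 \<in> V" using Vne by auto
    then have "is_path V E [u0]" unfolding is_path_def by auto
    then have ne: "{length p | p. is_path V E p} \<noteq> {}" by auto
    have "?t \<in> {length p | p. is_path V E p}"
      unfolding tau_def using Max_in[OF finT ne] .
    then obtain q where q: "is_path V E q" "length q = ?t" by auto
    have uV: "hd q \<in> V" using q(1) unfolding is_path_def by (auto simp: hd_in_set subset_iff)
    have "length q \<in> {length p | p. is_path V E p \<and> hd p = hd q}" by (rule CollectI, rule exI[of _ q]) (simp add: q(1))
    then have "?t \<le> tau_v V E (hd q)" unfolding tau_v_def using Max_ge[OF finTv] q(2) by simp
    moreover have "tau_v V E (hd q) \<le> ?t"
    proof -
      have "is_path V E [hd q]" using uV unfolding is_path_def by auto
      then have ne2: "{length p | p. is_path V E p \<and> hd p = hd q} \<noteq> {}" by force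
      show ?thesis unfolding tau_v_def using Max_in[OF finTv ne2] le_t by auto
    qed
    moreover have "tau_v V E v = tau_v V E (hd q)"
      using assms(5) uV that unfolding detour_graph_def by blast
    ultimately show ?thesis by simp
  qed
  have main: "int (degree V E v) \<le> ceiling ((real ?t - 2) / 2)" if vV: "v \<in> V" for v
  proof -
    have "is_path V E [v]" using vV unfolding is_path_def by auto
    then have ne2: "{length p | p. is_path V E p \<and> hd p = v} \<noteq> {}" by force
    have "tau_v V E v \<in> {length p | p. is_path V E p \<and> hd p = v}"
      unfolding tau_v_def using Max_in[OF finTv ne2] .
    then obtain p where p: "is_path V E p" "hd p = v" "length p = ?t"
      using tv_t[OF vV] by auto
    have pne: "p \<noteq> []" using p unfolding is_path_def by auto
    have v0: "p ! 0 = v" using p pne by (simp add: hd_conv_nth)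
    let ?N = "{u\<in>V. E v u}"
    let ?S = "{i. i < ?t \<and> odd i}"
    have Nsub: "?N \<subseteq> (\<lambda>i. p ! i) ` ?S"
    proof
      fix u assume u: "u \<in> ?N"
      have "u \<in> set p"
      proof (rule ccontr)
        assume "u \<notin> set p"
        then have "is_path V E (u # p)" using path_cons[OF p(1)] u p(2) sg(3) by auto
        then show False using le_t p(3) by fastforce
      qed
      then obtain i where i: "i < length p" "p ! i = u" by (auto simp: in_set_conv_nth)
      have "odd i"
      proof (rule ccontr)
        assume "\<not> odd i"
        then have "(u \<in> A) = (v \<in> A)" using parity[OF p(1) AB, of i] i v0 by simp
        moreover have "(u \<in> A) = (v \<notin> A)" using u AB(2,3) by blast
        ultimately show False by blast
      qed
      then show "u \<in> (\<lambda>i. p ! i) ` ?S" using i p(3) by auto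
    qed
    have finS: "finite ?S" by simp
    have cN: "card ?N \<le> ?t div 2"
      using card_mono[OF finite_imageI[OF finS] Nsub] card_image_le[OF finS, of "\<lambda>i. p ! i"]
        card_odd[of ?t] by linarith
    have deg: "degree V E v = card ?N" unfolding degree_def by simp
    have tpos: "?t \<ge> 1" using p(3) pne by (cases p) auto
    show ?thesis
    proof (cases "odd ?t")
      case True
      then obtain m where m: "?t = 2 * m + 1" using oddE by blast
      have "card ?N \<le> m" using cN m by simp
      then show ?thesis unfolding deg using m
        by (simp add: le_ceiling_iff)
    next
      case False
      then obtain m where m: "?t = 2 * m" using evenE by blast
      have "card ?N < m"
      proof (rule ccontr)
        assume "\<not> card ?N < m"
        then have eq: "card ?N = m" using cN m by simp
        have m1: "m \<ge> 1" using tpos m by simp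
        have "card ((\<lambda>i. p ! i) ` ?S) \<le> card ?N"
          using card_image_le[OF finS, of "\<lambda>i. p ! i"] card_odd[of ?t] m eq by simp
        then have Neq: "?N = (\<lambda>i. p ! i) ` ?S"
          using card_subset_eq[OF finite_imageI[OF finS] Nsub] card_mono[OF finite_imageI[OF finS] Nsub] by linarith
        have "?t - 1 \<in> ?S" using m m1 by auto
        then have "p ! (?t - 1) \<in> ?N" using Neq by blast
        then have "E v (last p)" using p(3) pne by (simp add: last_conv_nth)
        then have cyc: "E (last p) (hd p)" using sg(3) p(2) by blast
        have "set p \<noteq> V" using assms(4) p(1) unfolding traceable_def by blast
        moreover have "set p \<subseteq> V" using p(1) unfolding is_path_def by auto
        ultimately obtain w where w: "w \<in> V" "w \<notin> set p" by blast
        obtain q where q: "is_path V E q" "hd q = v" "last q = w"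
          using assms(3) vV w(1) unfolding connected_graph_def by blast
        have qne: "q \<noteq> []" using q unfolding is_path_def by auto
        have "\<exists>k. k < length q \<and> q ! k \<notin> set p"
          using q(3) qne w(2) by (metis last_conv_nth diff_less length_greater_0_conv zero_less_one)
        then obtain k where k: "k < length q" "q ! k \<notin> set p"
          "\<forall>k'. k' < k \<longrightarrow> q ! k' \<in> set p"
          using exists_least_iff[where P = "\<lambda>k. k < length q \<and> q ! k \<notin> set p"]
          by (metis (no_types, lifting) order.strict_trans)
        have "k \<noteq> 0" using k(2) q(2) qne p(2) pne by (metis hd_conv_nth hd_in_set)
        then obtain k0 where k0: "k = Suc k0" by (cases k) auto
        have inp: "q ! k0 \<in> set p" using k(3) k0 by auto
        have Eq: "E (q ! k0) (q ! k)" using q(1) k(1) k0 unfolding is_path_def by auto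
        obtain j where j: "j < length p" "p ! j = q ! k0" using inp by (auto simp: in_set_conv_nth)
        have xV: "q ! k \<in> V" using sg(2)[OF Eq] by simp
        have rp: "is_path V E (rotate j p)" using path_rotate[OF p(1) cyc] .
        have "hd (rotate j p) = p ! j"
          using j pne by (simp add: hd_conv_nth nth_rotate)
        then have "is_path V E (q ! k # rotate j p)"
          using path_cons[OF rp xV] k(2) Eq j(2) sg(3) by auto
        then show False using le_t p(3) by fastforce
      qed
      then show ?thesis unfolding deg using m
        by (simp add: le_ceiling_iff)
    qed
  qed
  have "max_degree V E \<in> degree V E ` V"
    unfolding max_degree_def using sg(1) Vne by (simp add: Max_in)
  then show ?thesis using main by auto
qed

end
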